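(* Let $K$ be a field and assume: (1) $A$ is a (left and right) noetherian $K$-algebra without zero divisors; (2) $w\in A$ is a nonzero normal element, i.e. $wA=Aw$, and $\sigma$ is the automorphism of $A$ with $wy=\sigma(y)w$ for all $y\in A$; (3) $J$ is a maximal left ideal of $A$ such that $w-\mu\in J$ for some nonzero $\mu\in K$. Let $x\in A$ be a nonzero non-unit, set $I=Jx$, $L=Ax/I$, $M=A/I$, $N=A/Ax$, so that there is a short exact sequence $0\to L\to M\to N\to 0$ of left $A$-modules. Assume further: (4) for every integer $m\ge 0$ there is no $a\in A$ with $\sigma^m(x)a-1\in J$; (5) $N\supsetneq wN\supsetneq w^2N\supsetneq\cdots\supsetneq w^mN\supsetneq\cdots$ is a strictly descending chain of submodules of $N$; (6) every nonzero submodule of $N$ contains $w^mN$ for some $m\ge 0$. Then $M$ is an essential extension of $L$, i.e. every nonzero submodule of $M$ intersects $L$ nontrivially (equivalently, every left ideal of $A$ strictly containing $I$ contains $Ax$).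
   Context: An element $w$ of a ring $A$ is normal if $wA=Aw$. For a normal element $w$ and a left $A$-module $N$, $w^mN$ is a submodule of $N$. *)

theory Defs
  imports Main
begin

definition left_ideal :: "'a::ring_1 set \<Rightarrow> bool" where
  "left_ideal T \<longleftrightarrow> 0 \<in> T \<and> (\<forall>a\<in>T. \<forall>b\<in>T. a + b \<in> T) \<and> (\<forall>r. \<forall>a\<in>T. r * a \<in> T)"

definition right_ideal :: "'a::ring_1 set \<Rightarrow> bool" where
  "right_ideal T \<longleftrightarrow> 0 \<in> T \<and> (\<forall>a\<in>T. \<forall>b\<in>T. a + b \<in> T) \<and> (\<forall>r. \<forall>a\<in>T. a * r \<in> T)"

definition left_noetherian :: "'a::ring_1 itself \<Rightarrow> bool" where
  "left_noetherian _ \<longleftrightarrow> (\<forall>C :: nat \<Rightarrow> 'a set. (\<forall>n. left_ideal (C n)) \<and> (\<forall>n. C n \<subseteq> C (Suc n))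
      \<longrightarrow> (\<exists>n0. \<forall>n\<ge>n0. C n = C n0))"

definition right_noetherian :: "'a::ring_1 itself \<Rightarrow> bool" where
  "right_noetherian _ \<longleftrightarrow> (\<forall>C :: nat \<Rightarrow> 'a set. (\<forall>n. right_ideal (C n)) \<and> (\<forall>n. C n \<subseteq> C (Suc n))
      \<longrightarrow> (\<exists>n0. \<forall>n\<ge>n0. C n = C n0))"

definition maximal_left_ideal :: "'a::ring_1 set \<Rightarrow> bool" where
  "maximal_left_ideal J \<longleftrightarrow> left_ideal J \<and> J \<noteq> UNIV \<and>
     (\<forall>T. left_ideal T \<and> J \<subseteq> T \<longrightarrow> T = J \<or> T = UNIV)"

text \<open>A K-algebra structure: a unital ring homomorphism from the field K into the centre.\<close>
definition algebra_map :: "('k::field \<Rightarrow> 'a::ring_1) \<Rightarrow> bool" where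
  "algebra_map \<phi> \<longleftrightarrow> \<phi> 1 = 1 \<and> (\<forall>c d. \<phi> (c + d) = \<phi> c + \<phi> d) \<and> (\<forall>c d. \<phi> (c * d) = \<phi> c * \<phi> d)
     \<and> (\<forall>c a. \<phi> c * a = a * \<phi> c)"

definition ring_automorphism :: "('a::ring_1 \<Rightarrow> 'a) \<Rightarrow> bool" where
  "ring_automorphism \<sigma> \<longleftrightarrow> bij \<sigma> \<and> \<sigma> 1 = 1 \<and> (\<forall>a b. \<sigma> (a + b) = \<sigma> a + \<sigma> b)
     \<and> (\<forall>a b. \<sigma> (a * b) = \<sigma> a * \<sigma> b)"

text \<open>The left ideal \<open>I\<close> with \<open>w\<^sup>m (A/I) = (w\<^sup>m A + I)/I\<close>, i.e. the preimage in A of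
  the submodule \<open>w\<^sup>m N\<close> of \<open>N = A/Ax\<close>.\<close>
definition wpow_N :: "'a::ring_1 \<Rightarrow> 'a \<Rightarrow> nat \<Rightarrow> 'a set" where
  "wpow_N w x m = {w ^ m * a + c * x | a c. True}"

end

theory Submission
  imports Defs
begin

lemma wpow_comm:
  fixes w :: "'a::ring_1"
  assumes "\<forall>y. w * y = \<sigma> y * w"
  shows "w ^ m * y = (\<sigma> ^^ m) y * w ^ m"
proof (induction m arbitrary: y)
  case 0 then show ?case by simp
next
  case (Suc m)
  have "w ^ Suc m * y = w * (w ^ m * y)" by (simp add: mult.assoc)
  also have "\<dots> = w * ((\<sigma> ^^ m) y * w ^ m)" using Suc by simp
  also have "\<dots> = \<sigma> ((\<sigma> ^^ m) y) * w * w ^ m" using assms by (metis mult.assoc)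
  finally show ?case by (simp add: mult.assoc)
qed

lemma central_pow:
  fixes p :: "'a::ring_1"
  assumes "\<forall>a. p * a = a * p"
  shows "p ^ m * a = a * p ^ m"
proof (induction m)
  case 0 then show ?case by simp
next
  case (Suc m)
  have "p ^ Suc m * a = p * (p ^ m * a)" by (simp add: mult.assoc)
  also have "\<dots> = p * a * p ^ m" using Suc by (simp add: mult.assoc)
  also have "\<dots> = a * p * p ^ m" using assms by metis
  finally show ?case by (simp add: mult.assoc)
qed

lemma pow_minus_in:
  fixes w p :: "'a::ring_1"
  assumes J: "left_ideal J" and c: "\<forall>a. p * a = a * p" and wp: "w - p \<in> J"
  shows "w ^ m - p ^ m \<in> J"
proof (induction m)
  case 0 then show ?case using J by (simp add: left_ideal_def)
next
  case (Suc m)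
  have e: "w ^ Suc m - p ^ Suc m = w ^ m * (w - p) + p * (w ^ m - p ^ m)"
  proof -
    have "p * w ^ m = w ^ m * p" using c by blast
    moreover have "p ^ Suc m = p * p ^ m" by simp
    moreover have "w ^ Suc m = w ^ m * w" by (simp add: power_commutes)
    ultimately show ?thesis by (simp add: algebra_simps)
  qed
  have "w ^ m * (w - p) \<in> J" "p * (w ^ m - p ^ m) \<in> J"
    using J wp Suc by (auto simp: left_ideal_def)
  then show ?case using e J by (simp add: left_ideal_def)
qed

lemma inv_pow:
  fixes q p :: "'a::ring_1"
  assumes "q * p = 1" "\<forall>a. q * a = a * q"
  shows "q ^ m * p ^ m = 1"
proof (induction m)
  case 0 then show ?case by simp
next
  case (Suc m)
  have "q ^ Suc m * p ^ Suc m = q ^ m * (q * p) * p ^ m"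
    by (simp add: mult.assoc power_commutes[of q m, symmetric])
  also have "\<dots> = 1" using assms(1) Suc by simp
  finally show ?case .
qed

theorem theorem2p2:
  fixes \<phi> :: "'k::field \<Rightarrow> 'a::ring_1_no_zero_divisors"
    and w x \<mu> :: _ and \<sigma> :: "'a \<Rightarrow> 'a" and J :: "'a set"
  assumes alg: "algebra_map \<phi>"
    and noeth_l: "left_noetherian TYPE('a)"
    and noeth_r: "right_noetherian TYPE('a)"
    and w_nz: "w \<noteq> 0"
    and w_normal: "{w * a | a. True} = {a * w | a. True}"
    and sigma_aut: "ring_automorphism \<sigma>"
    and sigma_w: "\<forall>y. w * y = \<sigma> y * w"
    and J_max: "maximal_left_ideal J"
    and mu_nz: "(\<mu>::'k) \<noteq> 0"
    and w_mu: "w - \<phi> \<mu> \<in> J"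
    and x_nz: "x \<noteq> 0"
    and x_nonunit: "\<not> (\<exists>y. x * y = 1 \<and> y * x = 1)"
    and cond4: "\<forall>m::nat. \<not> (\<exists>a. (\<sigma> ^^ m) x * a - 1 \<in> J)"
    and cond5: "\<forall>m. wpow_N w x (Suc m) \<subset> wpow_N w x m"
    and cond6: "\<forall>T. left_ideal T \<and> {c * x | c. True} \<subset> T \<longrightarrow> (\<exists>m. wpow_N w x m \<subseteq> T)"
  shows "\<forall>T. left_ideal T \<and> {j * x | j. j \<in> J} \<subset> T \<longrightarrow>
           (\<exists>t \<in> T \<inter> {c * x | c. True}. t \<notin> {j * x | j. j \<in> J})"
proof (intro allI impI)
  fix T assume TT: "left_ideal T \<and> {j * x | j. j \<in> J} \<subset> T"
  hence LT: "left_ideal T" and sub: "{j * x | j. j \<in> J} \<subset> T" by auto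
  have LJ: "left_ideal J" using J_max by (simp add: maximal_left_ideal_def)
  define p where "p = \<phi> \<mu>"
  have pc: "\<forall>a. p * a = a * p" using alg unfolding algebra_map_def p_def by blast
  show "\<exists>t \<in> T \<inter> {c * x | c. True}. t \<notin> {j * x | j. j \<in> J}"
  proof (rule ccontr)
    assume H: "\<not> ?thesis"
    hence H': "\<And>t c. t \<in> T \<Longrightarrow> t = c * x \<Longrightarrow> \<exists>j\<in>J. t = j * x" by blast
    define T' where "T' = {t + c * x | t c. t \<in> T}"
    have LT': "left_ideal T'"
      unfolding left_ideal_def T'_def
    proof (intro conjI ballI allI)
      have "(0::'a) = 0 + 0 * x" "(0::'a) \<in> T" using LT by (auto simp: left_ideal_def)
      thus "0 \<in> {t + c * x |t c. t \<in> T}" by blast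
    next
      fix a b assume "a \<in> {t + c * x |t c. t \<in> T}" "b \<in> {t + c * x |t c. t \<in> T}"
      then obtain t1 c1 t2 c2 where "a = t1 + c1 * x" "b = t2 + c2 * x" "t1 \<in> T" "t2 \<in> T" by blast
      moreover have "t1 + t2 \<in> T" using LT \<open>t1 \<in> T\<close> \<open>t2 \<in> T\<close> by (simp add: left_ideal_def)
      moreover have "a + b = (t1 + t2) + (c1 + c2) * x" using calculation by (simp add: algebra_simps)
      ultimately show "a + b \<in> {t + c * x |t c. t \<in> T}" by blast
    next
      fix r a assume "a \<in> {t + c * x |t c. t \<in> T}"
      then obtain t1 c1 where "a = t1 + c1 * x" "t1 \<in> T" by blast
      moreover have "r * t1 \<in> T" using LT \<open>t1 \<in> T\<close> by (simp add: left_ideal_def)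
      moreover have "r * a = (r * t1) + (r * c1) * x" using calculation by (simp add: algebra_simps)
      ultimately show "r * a \<in> {t + c * x |t c. t \<in> T}" by blast
    qed
    have AxT': "{c * x | c. True} \<subseteq> T'"
    proof
      fix y assume "y \<in> {c * x | c. True}"
      then obtain c where "y = c * x" by blast
      moreover have "0 \<in> T" using LT by (simp add: left_ideal_def)
      moreover have "y = 0 + c * x" using calculation by simp
      ultimately show "y \<in> T'" unfolding T'_def by blast
    qed
    have "\<exists>t\<in>T. t \<notin> {c * x | c. True}"
    proof (rule ccontr)
      assume "\<not> ?thesis"
      hence "T \<subseteq> {j * x | j. j \<in> J}" using H' by blast
      thus False using sub by blast
    qed
    then obtain t0 where t0: "t0 \<in> T" "t0 \<notin> {c * x | c. True}" by blast
    have "t0 = t0 + 0 * x" by simp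
    hence "t0 \<in> T'" unfolding T'_def using t0 by blast
    hence "{c * x | c. True} \<subset> T'" using AxT' t0 by blast
    then obtain m where "wpow_N w x m \<subseteq> T'" using cond6 LT' by blast
    moreover have "w ^ m \<in> wpow_N w x m"
    proof -
      have "w ^ m = w ^ m * 1 + 0 * x" by simp
      thus ?thesis unfolding wpow_N_def by blast
    qed
    ultimately have "w ^ m \<in> T'" by blast
    then obtain t c where tc: "w ^ m = t + c * x" "t \<in> T" unfolding T'_def by blast
    define s where "s = (\<sigma> ^^ m) x"
    have ws: "w ^ m * x = s * w ^ m" unfolding s_def using wpow_comm[OF sigma_w] .
    have "s * t \<in> T" using LT tc by (simp add: left_ideal_def)
    have st: "s * t = (w ^ m - s * c) * x"
      using tc ws by (simp add: algebra_simps)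
    then obtain j where j: "j \<in> J" "s * t = j * x" using H' \<open>s * t \<in> T\<close> by blast
    have "(w ^ m - s * c - j) * x = 0" using st j by (simp add: algebra_simps)
    hence eq: "w ^ m - s * c = j" using x_nz by simp
    have wpJ: "w ^ m - p ^ m \<in> J" using pow_minus_in[OF LJ pc] w_mu p_def by simp
    have e1: "p ^ m - s * c = j + (- (w ^ m - p ^ m))" using eq by (simp add: algebra_simps)
    have "- (w ^ m - p ^ m) \<in> J"
      using LJ wpJ by (metis left_ideal_def mult_minus1)
    hence e3: "j + (- (w ^ m - p ^ m)) \<in> J" using LJ j unfolding left_ideal_def by blast
    have d: "p ^ m - s * c \<in> J" by (subst e1) (rule e3)
    define q where "q = \<phi> (inverse \<mu>)"
    have qp: "q * p = 1" using alg mu_nz unfolding q_def p_def algebra_map_def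
      by (metis field_class.field_inverse)
    have qc: "\<forall>a. q * a = a * q" using alg unfolding algebra_map_def q_def by blast
    have qpm: "q ^ m * p ^ m = 1" by (rule inv_pow[OF qp qc])
    have "(- (q ^ m)) * (p ^ m - s * c) \<in> J" using LJ d unfolding left_ideal_def by blast
    moreover have "- (q ^ m) * (p ^ m - s * c) = s * (c * q ^ m) - 1"
    proof -
      have "- (q ^ m) * (p ^ m - s * c) = q ^ m * (s * c) - q ^ m * p ^ m"
        by (simp add: algebra_simps)
      also have "q ^ m * (s * c) = s * (c * q ^ m)"
        using central_pow[OF qc, of m "s * c"] by (simp add: mult.assoc)
      finally show ?thesis using qpm by simp
    qed
    ultimately have "s * (c * q ^ m) - 1 \<in> J" by simp
    thus False using cond4 s_def by blast
  qed
qed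

end
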